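(* (a) If $X\sim\mathrm{Poisson}(\lambda)$ and $Y\sim\mathrm{Poisson}(\mu)$ with $\lambda,\mu>0$, then $X\le_{wd}Y$ if and only if $\lambda\le\mu$. (b) If $X\sim\mathrm{Bin}(m,p)$ and $Y\sim\mathrm{Bin}(n,p)$ with $p\in(0,1)$, then $X\le_{wd}Y$ if and only if $m\le n$. (c) If $X\sim\mathrm{NB}(r,p)$ and $Y\sim\mathrm{NB}(s,p)$, then $X\le_{wd}Y$ if and only if $r\le s$.
   Context: For a real random variable $X$, its Lévy concentration function is $Q_X(\varepsilon)=\sup_{x_0\in\mathbb{R}}\Pr\{X\in[x_0,x_0+\varepsilon]\}$, $\varepsilon>0$. For random variables $X,Y$, write $X\le_{wd}Y$ if $Q_X(\varepsilon)\ge Q_Y(\varepsilon)$ for all $\varepsilon>0$. $\mathrm{NB}(r,p)$ denotes the negative binomial distribution with size parameter $r>0$ and success probability $p\in(0,1)$ (so that $\mathrm{NB}(r,p)*\mathrm{NB}(s,p)=\mathrm{NB}(r+s,p)$). *)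

theory Defs
  imports "HOL-Probability.Probability"
begin

definition levy_conc :: "real measure \<Rightarrow> real \<Rightarrow> real" where
  "levy_conc M \<epsilon> = (SUP x0\<in>(UNIV::real set). measure M {x0..x0 + \<epsilon>})"

definition wd_le :: "real measure \<Rightarrow> real measure \<Rightarrow> bool" where
  "wd_le M N \<longleftrightarrow> (\<forall>\<epsilon>>0. levy_conc M \<epsilon> \<ge> levy_conc N \<epsilon>)"

definition real_law :: "nat pmf \<Rightarrow> real measure" where
  "real_law X = measure_pmf (map_pmf real X)"

text \<open>Negative binomial NB(r,p): number of failures before the r-th success,
  P(k) = ((r+k-1) gchoose k) p^r (1-p)^k.\<close>
definition neg_binomial_pmf :: "real \<Rightarrow> real \<Rightarrow> nat pmf" where
  "neg_binomial_pmf r p =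
     embed_pmf (\<lambda>k. ((r + real k - 1) gchoose k) * p powr r * (1 - p) ^ k)"

end

theory Submission
  imports Defs "HOL-Computational_Algebra.Formal_Power_Series" "HOL-Analysis.Generalised_Binomial_Theorem"
begin

definition conv :: "nat pmf \<Rightarrow> nat pmf \<Rightarrow> nat pmf" where
  "conv Y Z = bind_pmf Z (\<lambda>z. map_pmf (\<lambda>y. y + z) Y)"

lemma pmf_map_shift: fixes Y :: "nat pmf" shows "pmf (map_pmf (\<lambda>y. y + z) Y) k = (if z \<le> k then pmf Y (k - z) else 0)"
proof -
  have "(\<lambda>y. y + z) -` {k} = (if z \<le> k then {k - z} else {})" by (auto; arith)
  then show ?thesis by (simp add: pmf_map measure_pmf_single)
qed

lemma pmf_conv: fixes Y Z :: "nat pmf" shows "pmf (conv Y Z) k = (\<Sum>j\<le>k. pmf Z j * pmf Y (k - j))"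
proof -
  have "pmf (conv Y Z) k = (\<integral>z. (if z \<le> k then pmf Y (k - z) else 0) \<partial>measure_pmf Z)"
    unfolding conv_def pmf_bind pmf_map_shift ..
  also have "\<dots> = (\<Sum>j\<le>k. (if j \<le> k then pmf Y (k - j) else 0) * pmf Z j)"
    by (rule integral_measure_pmf_real) (auto split: if_splits)
  finally show ?thesis by (simp add: mult.commute)
qed

lemma measure_le_levy:
  "measure (real_law X) {x0..x0 + e} \<le> levy_conc (real_law X) e"
  unfolding levy_conc_def
  by (rule cSUP_upper) (auto intro!: bdd_aboveI[where M=1] simp: real_law_def)

lemma levy_conv_le:
  assumes "e \<ge> 0"
  shows "levy_conc (real_law (conv Y Z)) e \<le> levy_conc (real_law Y) e"
proof -
  let ?Q = "levy_conc (real_law Y) e"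
  have Q0: "0 \<le> ?Q" using measure_le_levy[of Y 0 e] by (simp add: real_law_def) (smt (verit) measure_nonneg)
  show ?thesis unfolding levy_conc_def[of "real_law (conv Y Z)"]
  proof (rule cSUP_least)
    fix x0 :: real assume "x0 \<in> UNIV"
    have rl: "real_law (conv Y Z) = measure_pmf (bind_pmf Z (\<lambda>z. map_pmf (\<lambda>y. real y + real z) Y))"
      unfolding real_law_def conv_def map_bind_pmf by (simp add: pmf.map_comp o_def)
    have "emeasure (real_law (conv Y Z)) {x0..x0+e} =
      (\<integral>\<^sup>+z. emeasure (measure_pmf (map_pmf (\<lambda>y. real y + real z) Y)) {x0..x0+e} \<partial>measure_pmf Z)"
      unfolding rl by simp
    also have "\<dots> \<le> (\<integral>\<^sup>+z. ennreal ?Q \<partial>measure_pmf Z)"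
    proof (rule nn_integral_mono)
      fix z
      have "measure (measure_pmf (map_pmf (\<lambda>y. real y + real z) Y)) {x0..x0+e}
          = measure (real_law Y) {x0 - real z..x0 - real z + e}"
        unfolding real_law_def measure_map_pmf by (rule arg_cong[where f="measure Y"]) auto
      also have "\<dots> \<le> ?Q" by (rule measure_le_levy)
      finally show "emeasure (measure_pmf (map_pmf (\<lambda>y. real y + real z) Y)) {x0..x0+e} \<le> ennreal ?Q"
        by (simp add: measure_pmf.emeasure_eq_measure ennreal_leI)
    qed
    also have "\<dots> = ennreal ?Q" by simp
    finally show "measure (real_law (conv Y Z)) {x0..x0+e} \<le> ?Q"
      using Q0 by (simp add: real_law_def measure_pmf.emeasure_eq_measure)
  qed simp
qed


lemma pmf_le_levy: "pmf X k \<le> levy_conc (real_law X) e" if "e \<ge> 0"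
proof -
  have "pmf X k = measure (measure_pmf X) {k}" by (simp add: measure_pmf_single)
  also have "\<dots> \<le> measure (measure_pmf X) (real -` {real k..real k + e})"
    by (rule measure_pmf.finite_measure_mono) (use that in auto)
  also have "\<dots> = measure (real_law X) {real k..real k + e}" by (simp add: real_law_def)
  also have "\<dots> \<le> levy_conc (real_law X) e" by (rule measure_le_levy)
  finally show ?thesis .
qed

lemma levy_small_le:
  fixes X :: "nat pmf"
  assumes "e < 1" "\<And>k. pmf X k \<le> c" "0 \<le> c"
  shows "levy_conc (real_law X) e \<le> c"
  unfolding levy_conc_def
proof (rule cSUP_least)
  fix x0 :: real assume "x0 \<in> UNIV"
  let ?S = "real -` {x0..x0+e} :: nat set"
  show "measure (real_law X) {x0..x0+e} \<le> c"
  proof (cases "?S = {}")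
    case True then show ?thesis using assms by (simp add: real_law_def)
  next
    case False
    then obtain k where k: "k \<in> ?S" by blast
    have "?S \<subseteq> {k}"
    proof
      fix j assume "j \<in> ?S"
      with k assms(1) have "\<bar>real j - real k\<bar> < 1" by auto
      then show "j \<in> {k}" by auto
    qed
    then have "measure (measure_pmf X) ?S \<le> measure (measure_pmf X) {k}"
      by (rule measure_pmf.finite_measure_mono) simp
    also have "\<dots> \<le> c" using assms by (simp add: measure_pmf_single)
    finally show ?thesis by (simp add: real_law_def)
  qed
qed simp

lemma pmf_argmax:
  fixes X :: "'a pmf"
  shows "\<exists>k0. \<forall>k. pmf X k \<le> pmf X k0"
proof -
  obtain a where a: "a \<in> set_pmf X" using set_pmf_not_empty[of X] by blast
  define t where "t = pmf X a"
  have t: "t > 0" using a by (simp add: t_def pmf_positive)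
  define T where "T = {k. t \<le> pmf X k}"
  have fin: "finite T"
  proof (rule ccontr)
    assume "\<not> finite T"
    then obtain F where F: "F \<subseteq> T" "finite F" "card F = nat (ceiling (1/t)) + 1"
      by (meson infinite_arbitrarily_large)
    have "real (card F) * t \<le> (\<Sum>k\<in>F. pmf X k)"
      using F(1) sum_mono[of F "\<lambda>_. t" "pmf X"] by (auto simp: T_def)
    also have "\<dots> = measure (measure_pmf X) F" using F by (simp add: measure_measure_pmf_finite)
    also have "\<dots> \<le> 1" by simp
    finally have "real (card F) * t \<le> 1" .
    moreover have "real (card F) > 1/t" using F(3) by (simp; linarith)
    ultimately show False using t by (simp add: field_simps)
  qed
  have "a \<in> T" by (simp add: T_def t_def)
  then obtain k0 where k0: "k0 \<in> T" "\<forall>k\<in>T. pmf X k \<le> pmf X k0"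
    using fin by (metis (no_types, lifting) Max_ge Max_in empty_iff finite_imageI imageE image_eqI)
  show ?thesis
  proof (intro exI allI)
    fix k show "pmf X k \<le> pmf X k0"
      using k0 by (cases "k \<in> T") (auto simp: T_def)
  qed
qed

lemma levy_conv_less:
  fixes Y Z :: "nat pmf"
  assumes e: "0 \<le> e" "e < 1" and Zpos: "\<And>j. pmf Z j > 0"
  shows "levy_conc (real_law (conv Y Z)) e < levy_conc (real_law Y) e"
proof -
  obtain k0 where k0: "\<forall>k. pmf (conv Y Z) k \<le> pmf (conv Y Z) k0" using pmf_argmax[of "conv Y Z"] by blast
  obtain k1 where k1: "\<forall>k. pmf Y k \<le> pmf Y k1" using pmf_argmax[of Y] by blast
  obtain a where a: "a \<in> set_pmf Y" using set_pmf_not_empty[of Y] by blast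
  have M: "pmf Y k1 > 0" using k1 a by (meson less_le_trans pmf_positive)
  have "levy_conc (real_law (conv Y Z)) e \<le> pmf (conv Y Z) k0"
    by (rule levy_small_le) (use e k0 in auto)
  also have "\<dots> = (\<Sum>j\<le>k0. pmf Z j * pmf Y (k0 - j))" by (rule pmf_conv)
  also have "\<dots> \<le> (\<Sum>j\<le>k0. pmf Z j * pmf Y k1)"
    by (rule sum_mono) (simp add: k1 mult_left_mono)
  also have "\<dots> = measure (measure_pmf Z) {..k0} * pmf Y k1"
    by (simp add: measure_measure_pmf_finite sum_distrib_right)
  also have "\<dots> < pmf Y k1"
  proof -
    have "measure (measure_pmf Z) {..k0} + pmf Z (Suc k0) = measure (measure_pmf Z) ({..k0} \<union> {Suc k0})"
      by (simp add: measure_measure_pmf_finite)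
    also have "\<dots> \<le> 1" by simp
    finally have "measure (measure_pmf Z) {..k0} < 1" using Zpos[of "Suc k0"] by linarith
    then show ?thesis using M by simp
  qed
  also have "\<dots> \<le> levy_conc (real_law Y) e" by (rule pmf_le_levy) (use e in auto)
  finally show ?thesis .
qed


lemma poisson_conv:
  assumes a: "0 < a" and b: "0 < b"
  shows "conv (poisson_pmf a) (poisson_pmf b) = poisson_pmf (a + b)"
proof (rule pmf_eqI)
  fix k
  have "pmf (conv (poisson_pmf a) (poisson_pmf b)) k
      = (\<Sum>j\<le>k. (b ^ j / fact j * exp (-b)) * (a ^ (k - j) / fact (k - j) * exp (-a)))"
    using a b by (simp add: pmf_conv)
  also have "\<dots> = (\<Sum>j\<le>k. real (k choose j) * b ^ j * a ^ (k - j)) / fact k * exp (-(a+b))"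
    unfolding sum_divide_distrib sum_distrib_right
  proof (rule sum.cong)
    fix j assume "j \<in> {..k}"
    then have "j \<le> k" by simp
    then show "b ^ j / fact j * exp (- b) * (a ^ (k - j) / fact (k - j) * exp (- a)) =
      real (k choose j) * b ^ j * a ^ (k - j) / fact k * exp (- (a + b))"
      by (simp add: binomial_fact exp_add[symmetric] field_simps)
  qed simp
  also have "\<dots> = (b + a) ^ k / fact k * exp (-(a+b))" by (simp add: binomial_ring)
  also have "\<dots> = pmf (poisson_pmf (a + b)) k" using a b by (simp add: add.commute)
  finally show "pmf (conv (poisson_pmf a) (poisson_pmf b)) k = pmf (poisson_pmf (a + b)) k" .
qed

lemma binomial_conv:
  assumes p: "0 \<le> p" "p \<le> 1"
  shows "conv (binomial_pmf m p) (binomial_pmf d p) = binomial_pmf (m + d) p"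
proof (rule pmf_eqI)
  fix k
  have "pmf (conv (binomial_pmf m p) (binomial_pmf d p)) k
      = (\<Sum>j\<le>k. (real (d choose j) * p ^ j * (1 - p) ^ (d - j)) * (real (m choose (k - j)) * p ^ (k - j) * (1 - p) ^ (m - (k - j))))"
    using p by (simp add: pmf_conv)
  also have "\<dots> = (\<Sum>j\<le>k. real (d choose j) * real (m choose (k - j))) * p ^ k * (1 - p) ^ (m + d - k)"
    unfolding sum_distrib_right
  proof (rule sum.cong)
    fix j assume "j \<in> {..k}"
    then have jk: "j \<le> k" by simp
    show "real (d choose j) * p ^ j * (1 - p) ^ (d - j) * (real (m choose (k - j)) * p ^ (k - j) * (1 - p) ^ (m - (k - j))) =
      real (d choose j) * real (m choose (k - j)) * p ^ k * (1 - p) ^ (m + d - k)"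
    proof (cases "j \<le> d \<and> k - j \<le> m")
      case True
      have e1: "p ^ j * p ^ (k - j) = p ^ k" using jk by (simp add: power_add[symmetric])
      have ex: "(d - j) + (m - (k - j)) = m + d - k" using True jk by arith
      have e2: "(1 - p) ^ (d - j) * (1 - p) ^ (m - (k - j)) = (1 - p) ^ (m + d - k)"
        by (simp only: power_add[symmetric] ex)
      show ?thesis
        by (simp add: e1[symmetric] e2[symmetric] mult_ac)
    next
      case False
      then show ?thesis by auto
    qed
  qed simp
  also have "(\<Sum>j\<le>k. real (d choose j) * real (m choose (k - j))) = real ((d + m) choose k)"
    using binomial_Vandermonde[of d m k] by (simp add: atLeast0AtMost flip: of_nat_mult of_nat_sum)
  also have "real ((d + m) choose k) * p ^ k * (1 - p) ^ (m + d - k) = pmf (binomial_pmf (m + d) p) k"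
    using p by (simp add: add.commute)
  finally show "pmf (conv (binomial_pmf m p) (binomial_pmf d p)) k = pmf (binomial_pmf (m + d) p) k" .
qed


lemma nb_coef_pos:
  assumes "0 < r"
  shows "((r + real k - 1) gchoose k) > 0"
proof -
  have "(r + real k - 1) - real k + 1 = r" by simp
  then have "((r + real k - 1) gchoose k) = pochhammer r k / fact k"
    by (simp add: gbinomial_pochhammer')
  then show ?thesis using assms by (simp add: pochhammer_pos)
qed

lemma nb_sums:
  assumes r: "0 < r" and p: "0 < p" "p < 1"
  shows "(\<lambda>k. ((r + real k - 1) gchoose k) * p powr r * (1 - p) ^ k) sums 1"
proof -
  have "\<bar>p - 1\<bar> < 1" using p by simp
  from gen_binomial_real[OF this, of "-r"]
  have "(\<lambda>n. ((-r) gchoose n) * (p - 1) ^ n) sums (1 + (p - 1)) powr (-r)" .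
  moreover have "((-r) gchoose n) * (p - 1) ^ n = ((r + real n - 1) gchoose n) * (1 - p) ^ n" for n
  proof -
    have "(p - 1) ^ n = (-1) ^ n * (1 - p) ^ n"
      by (metis minus_diff_eq mult_minus1 power_mult_distrib)
    then show ?thesis
      by (simp add: gbinomial_minus power_mult_distrib[symmetric] mult_ac)
  qed
  ultimately have "(\<lambda>n. ((r + real n - 1) gchoose n) * (1 - p) ^ n) sums p powr (-r)" by simp
  from sums_mult[OF this, of "p powr r"]
  have "(\<lambda>n. p powr r * (((r + real n - 1) gchoose n) * (1 - p) ^ n)) sums (p powr r * p powr (-r))" .
  moreover have "p powr r * p powr (-r) = 1" using p by (simp add: powr_add[symmetric])
  ultimately show ?thesis by (simp add: mult_ac)
qed

lemma pmf_nb: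
  assumes r: "0 < r" and p: "0 < p" "p < 1"
  shows "pmf (neg_binomial_pmf r p) k = ((r + real k - 1) gchoose k) * p powr r * (1 - p) ^ k"
proof -
  let ?f = "\<lambda>k. ((r + real k - 1) gchoose k) * p powr r * (1 - p) ^ k"
  have nn: "\<And>k. 0 \<le> ?f k" using nb_coef_pos[OF r] p by (simp add: less_imp_le)
  have s: "?f sums 1" by (rule nb_sums[OF r p])
  have "(\<integral>\<^sup>+x. ennreal (?f x) \<partial>count_space UNIV) = 1"
    using s nn by (simp add: nn_integral_count_space_nat suminf_ennreal2 sums_summable sums_unique[symmetric])
  then show ?thesis unfolding neg_binomial_pmf_def
    by (subst pmf_embed_pmf) (use nn in auto)
qed

lemma nb_pos:
  assumes r: "0 < r" and p: "0 < p" "p < 1"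
  shows "pmf (neg_binomial_pmf r p) k > 0"
  using nb_coef_pos[OF r, of k] p by (simp add: pmf_nb[OF r p])

lemma nb_conv:
  assumes r: "0 < r" and s: "0 < s" and p: "0 < p" "p < 1"
  shows "conv (neg_binomial_pmf r p) (neg_binomial_pmf s p) = neg_binomial_pmf (r + s) p"
proof (rule pmf_eqI)
  fix k
  have rs: "0 < r + s" using r s by simp
  have g: "((x + real n - 1) gchoose n) = (-1) ^ n * ((-x) gchoose n)" for x :: real and n
    by (simp add: gbinomial_minus)
  have "pmf (conv (neg_binomial_pmf r p) (neg_binomial_pmf s p)) k
      = (\<Sum>j\<le>k. (((s + real j - 1) gchoose j) * p powr s * (1 - p) ^ j) *
            (((r + real (k - j) - 1) gchoose (k - j)) * p powr r * (1 - p) ^ (k - j)))"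
    by (simp add: pmf_conv pmf_nb[OF r p] pmf_nb[OF s p])
  also have "\<dots> = (-1) ^ k * (\<Sum>j\<le>k. ((-s) gchoose j) * ((-r) gchoose (k - j))) * p powr (r + s) * (1 - p) ^ k"
    unfolding sum_distrib_left sum_distrib_right
  proof (rule sum.cong)
    fix j assume "j \<in> {..k}"
    then have jk: "j \<le> k" by simp
    have e1: "(1 - p) ^ j * (1 - p) ^ (k - j) = (1 - p) ^ k" using jk by (simp add: power_add[symmetric])
    have e2: "(-1::real) ^ j * (-1) ^ (k - j) = (-1) ^ k" using jk by (simp add: power_add[symmetric])
    have e3: "p powr s * p powr r = p powr (r + s)" by (simp add: powr_add)
    show "((s + real j - 1) gchoose j) * p powr s * (1 - p) ^ j *
            (((r + real (k - j) - 1) gchoose (k - j)) * p powr r * (1 - p) ^ (k - j)) =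
          (-1) ^ k * (((-s) gchoose j) * ((-r) gchoose (k - j))) * p powr (r + s) * (1 - p) ^ k"
      by (simp only: g e1[symmetric] e2[symmetric] e3[symmetric]) (simp add: mult_ac)
  qed simp
  also have "(\<Sum>j\<le>k. ((-s) gchoose j) * ((-r) gchoose (k - j))) = ((-s) + (-r)) gchoose k"
    using gbinomial_Vandermonde[of "-s" "-r" k] by (simp add: atLeast0AtMost)
  also have "(-1) ^ k * (((-s) + (-r)) gchoose k) = ((r + s) + real k - 1) gchoose k"
  proof -
    have "(-s) + (-r) = -(r + s)" by simp
    then show ?thesis by (simp only: g[of "r + s"])
  qed
  also have "(((r + s) + real k - 1) gchoose k) * p powr (r + s) * (1 - p) ^ k = pmf (neg_binomial_pmf (r + s) p) k"
    by (simp add: pmf_nb[OF rs p])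
  finally show "pmf (conv (neg_binomial_pmf r p) (neg_binomial_pmf s p)) k = pmf (neg_binomial_pmf (r + s) p) k"
    by (simp add: mult_ac)
qed


lemma wd_le_conv: "wd_le (real_law Y) (real_law (conv Y Z))"
  unfolding wd_le_def using levy_conv_le by (simp add: less_imp_le)

lemma not_wd_le_conv:
  assumes "\<And>j. pmf Z j > 0"
  shows "\<not> wd_le (real_law (conv Y Z)) (real_law Y)"
  unfolding wd_le_def not_all
  by (rule exI[of _ "1/2"]) (use levy_conv_less[of "1/2" Z Y] assms in auto)

lemma bin_strict:
  assumes p: "0 < p" "p < 1" and nm: "n < m"
  shows "\<not> wd_le (real_law (binomial_pmf m p)) (real_law (binomial_pmf n p))"
proof -
  define e where "e = real n + 1/2"
  define c where "c = 1 - min ((1 - p) ^ m) (p ^ m)"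
  let ?X = "binomial_pmf m p" and ?Y = "binomial_pmf n p"
  have "measure (measure_pmf ?Y) (- (real -` {0..e})) = 0"
    using p by (subst measure_pmf_zero_iff) (auto simp: e_def)
  then have "measure (measure_pmf ?Y) (real -` {0..e}) = 1"
    using measure_pmf.prob_compl[of "real -` {0..e}" ?Y] by (simp add: Compl_eq_Diff_UNIV)
  then have Y1: "1 \<le> levy_conc (real_law ?Y) e"
    using measure_le_levy[of ?Y 0 e] by (simp add: real_law_def)
  have cl: "c < 1" using p by (simp add: c_def)
  have X: "levy_conc (real_law ?X) e \<le> c"
    unfolding levy_conc_def
  proof (rule cSUP_least)
    fix x0 :: real assume "x0 \<in> UNIV"
    let ?S = "real -` {x0..x0+e} :: nat set"
    have "\<exists>a\<in>{0, m}. a \<notin> ?S" using nm by (auto simp: e_def)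
    then obtain a where a: "a \<in> {0, m}" "a \<notin> ?S" by blast
    have "measure (measure_pmf ?X) ?S \<le> measure (measure_pmf ?X) (UNIV - {a})"
      by (rule measure_pmf.finite_measure_mono) (use a in auto)
    also have "\<dots> = 1 - pmf ?X a"
      using measure_pmf.prob_compl[of "{a}" ?X] by (simp add: measure_pmf_single)
    also have "\<dots> \<le> c" using a p by (auto simp: c_def)
    finally show "measure (real_law ?X) {x0..x0+e} \<le> c" by (simp add: real_law_def)
  qed simp
  have "e > 0" by (simp add: e_def)
  then show ?thesis unfolding wd_le_def using X Y1 cl by force
qed

lemma wd_refl: "wd_le M M" by (simp add: wd_le_def)

theorem mainTheorem10:
  shows "(\<forall>(la::real) (mu::real). 0 < la \<longrightarrow> 0 < mu \<longrightarrow>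
            (wd_le (real_law (poisson_pmf la)) (real_law (poisson_pmf mu)) \<longleftrightarrow> la \<le> mu))
       \<and> (\<forall>(m::nat) (n::nat) (p::real). 0 < p \<longrightarrow> p < 1 \<longrightarrow>
            (wd_le (real_law (binomial_pmf m p)) (real_law (binomial_pmf n p)) \<longleftrightarrow> m \<le> n))
       \<and> (\<forall>(r::real) (s::real) (p::real). 0 < r \<longrightarrow> 0 < s \<longrightarrow> 0 < p \<longrightarrow> p < 1 \<longrightarrow>
            (wd_le (real_law (neg_binomial_pmf r p)) (real_law (neg_binomial_pmf s p)) \<longleftrightarrow> r \<le> s))"
proof (intro conjI allI impI)
  fix la mu :: real assume la: "0 < la" and mu: "0 < mu"
  show "wd_le (real_law (poisson_pmf la)) (real_law (poisson_pmf mu)) \<longleftrightarrow> la \<le> mu"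
  proof
    assume h: "wd_le (real_law (poisson_pmf la)) (real_law (poisson_pmf mu))"
    show "la \<le> mu"
    proof (rule ccontr)
      assume "\<not> la \<le> mu"
      then have d: "0 < la - mu" by simp
      have "poisson_pmf la = conv (poisson_pmf mu) (poisson_pmf (la - mu))"
        using poisson_conv[OF mu d] by simp
      with not_wd_le_conv[of "poisson_pmf (la - mu)" "poisson_pmf mu"] d h show False by simp
    qed
  next
    assume "la \<le> mu"
    show "wd_le (real_law (poisson_pmf la)) (real_law (poisson_pmf mu))"
    proof (cases "la = mu")
      case True then show ?thesis by (simp add: wd_refl)
    next
      case False
      with \<open>la \<le> mu\<close> have d: "0 < mu - la" by simp
      have "poisson_pmf mu = conv (poisson_pmf la) (poisson_pmf (mu - la))"
        using poisson_conv[OF la d] by simp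
      then show ?thesis using wd_le_conv by metis
    qed
  qed
next
  fix m n :: nat and p :: real assume p: "0 < p" "p < 1"
  show "wd_le (real_law (binomial_pmf m p)) (real_law (binomial_pmf n p)) \<longleftrightarrow> m \<le> n"
  proof
    assume "wd_le (real_law (binomial_pmf m p)) (real_law (binomial_pmf n p))"
    then show "m \<le> n" using bin_strict[OF p, of n m] by (cases "m \<le> n") auto
  next
    assume "m \<le> n"
    then have "binomial_pmf n p = conv (binomial_pmf m p) (binomial_pmf (n - m) p)"
      using binomial_conv[of p m "n - m"] p by simp
    then show "wd_le (real_law (binomial_pmf m p)) (real_law (binomial_pmf n p))"
      using wd_le_conv by metis
  qed
next
  fix r s p :: real assume r: "0 < r" and s: "0 < s" and p: "0 < p" "p < 1"
  show "wd_le (real_law (neg_binomial_pmf r p)) (real_law (neg_binomial_pmf s p)) \<longleftrightarrow> r \<le> s"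
  proof
    assume h: "wd_le (real_law (neg_binomial_pmf r p)) (real_law (neg_binomial_pmf s p))"
    show "r \<le> s"
    proof (rule ccontr)
      assume "\<not> r \<le> s"
      then have d: "0 < r - s" by simp
      have "neg_binomial_pmf r p = conv (neg_binomial_pmf s p) (neg_binomial_pmf (r - s) p)"
        using nb_conv[OF s d p] by simp
      with not_wd_le_conv[of "neg_binomial_pmf (r - s) p" "neg_binomial_pmf s p"] nb_pos[OF d p] h
      show False by simp
    qed
  next
    assume "r \<le> s"
    show "wd_le (real_law (neg_binomial_pmf r p)) (real_law (neg_binomial_pmf s p))"
    proof (cases "r = s")
      case True then show ?thesis by (simp add: wd_refl)
    next
      case False
      with \<open>r \<le> s\<close> have d: "0 < s - r" by simp
      have "neg_binomial_pmf s p = conv (neg_binomial_pmf r p) (neg_binomial_pmf (s - r) p)"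
        using nb_conv[OF r d p] by simp
      then show ?thesis using wd_le_conv by metis
    qed
  qed
qed

end
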